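(* Let $V$ be a real vector space of dimension $n$, $1\le k\le n-1$, and let $L\subseteq V\oplus\wedge^kV^*$ be weakly lagrangian. Then $L\cap V=\{0\}$ if and only if $L=\{\Lambda(\alpha)+\alpha\mid\alpha\in S\}$ is the graph of a higher Poisson structure $(S,\Lambda)$ on $V$. In this case, $L$ is lagrangian if and only if $L$ is standard (i.e. $\mathrm{rank}(\Lambda)=n$ or $\mathrm{rank}(\Lambda)\le n-k$) and $\mathrm{Ann}(\mathrm{Im}(\Lambda))=\ker(\Lambda)$.
   Context: On $V\oplus\wedge^kV^*$ consider the pairing $\langle X+\alpha,Y+\beta\rangle=i_X\beta+i_Y\alpha\in\wedge^{k-1}V^*$; $L^\perp$ is the orthogonal of $L$; $L$ is isotropic if $L\subseteq L^\perp$, lagrangian if $L=L^\perp$, and weakly lagrangian if isotropic and $L\cap V=\mathrm{pr}_2(L)^\circ$, where $\mathrm{pr}_2$ is the projection to $\wedge^kV^*$ and for $S\subseteq\wedge^kV^*$, $S^\circ=\{X\in V\mid i_X\eta=0\ \forall\eta\in S\}$. For $E\subseteq V$, $\mathrm{Ann}(E)=\{\alpha\in\wedge^kV^*\mid i_Y\alpha=0\ \forall Y\in E\}$. An isotropic $L$ is standard if $\mathrm{Ann}(E)^\circ=E$ where $E=\mathrm{pr}_1(L)$, equivalently $\dim E=n$ or $\dim E\le n-k$. A higher Poisson structure on $V$ is a pair $(S,\Lambda)$ with $S\subseteq\wedge^kV^*$ a subspace and $\Lambda:S\to V$ linear such that $S^\circ=\{0\}$ and $i_{\Lambda(\alpha)}\beta=-i_{\Lambda(\beta)}\alpha$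 for all $\alpha,\beta\in S$. *)

theory Defs
  imports "HOL-Analysis.Analysis"
begin

text \<open>Model: V is a finite-dimensional real vector space, given as a type
 'v :: euclidean_space with DIM('v) = n.  A k-form on V is represented as a function
 on lists of vectors that is multilinear and alternating on lists of length k and
 vanishes on lists of any other length.\<close>

type_synonym 'v form = "'v list \<Rightarrow> real"

definition is_form :: "nat \<Rightarrow> ('v::real_vector) form \<Rightarrow> bool" where
  "is_form k f \<longleftrightarrow>
     (\<forall>ys. length ys \<noteq> k \<longrightarrow> f ys = 0) \<and>
     (\<forall>ys i. i < length ys \<longrightarrow> linear (\<lambda>x. f (ys[i := x]))) \<and>
     (\<forall>ys i j. i < j \<and> j < length ys \<and> ys ! i = ys ! j \<longrightarrow> f ys = 0)"

definition Forms :: "nat \<Rightarrow> ('v::real_vector) form set" where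
  "Forms k = {f. is_form k f}"

definition contr :: "'v \<Rightarrow> 'v form \<Rightarrow> 'v form" where
  "contr X \<alpha> = (\<lambda>ys. \<alpha> (X # ys))"

definition pairing :: "('v \<times> 'v form) \<Rightarrow> ('v \<times> 'v form) \<Rightarrow> 'v form" where
  "pairing u w = (\<lambda>ys. contr (fst u) (snd w) ys + contr (fst w) (snd u) ys)"

definition Amb :: "nat \<Rightarrow> (('v::real_vector) \<times> 'v form) set" where
  "Amb k = UNIV \<times> Forms k"

text \<open>Linear subspaces, spelled out (function spaces carry no vector space
 instance in the library).\<close>
definition form_subspace :: "nat \<Rightarrow> ('v::real_vector) form set \<Rightarrow> bool" where
  "form_subspace k S \<longleftrightarrow> S \<subseteq> Forms k \<and> (\<lambda>_. 0) \<in> S \<and>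
     (\<forall>a\<in>S. \<forall>b\<in>S. (\<lambda>ys. a ys + b ys) \<in> S) \<and>
     (\<forall>c::real. \<forall>a\<in>S. (\<lambda>ys. c * a ys) \<in> S)"

definition amb_subspace :: "nat \<Rightarrow> (('v::real_vector) \<times> 'v form) set \<Rightarrow> bool" where
  "amb_subspace k L \<longleftrightarrow> L \<subseteq> Amb k \<and> (0, \<lambda>_. 0) \<in> L \<and>
     (\<forall>u\<in>L. \<forall>w\<in>L. (fst u + fst w, \<lambda>ys. snd u ys + snd w ys) \<in> L) \<and>
     (\<forall>c::real. \<forall>u\<in>L. (c *\<^sub>R fst u, \<lambda>ys. c * snd u ys) \<in> L)"

definition perp :: "nat \<Rightarrow> (('v::real_vector) \<times> 'v form) set \<Rightarrow> ('v \<times> 'v form) set" where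
  "perp k L = {u \<in> Amb k. \<forall>w\<in>L. pairing u w = (\<lambda>_. 0)}"

definition isotropic :: "nat \<Rightarrow> (('v::real_vector) \<times> 'v form) set \<Rightarrow> bool" where
  "isotropic k L \<longleftrightarrow> L \<subseteq> perp k L"

definition lagrangian :: "nat \<Rightarrow> (('v::real_vector) \<times> 'v form) set \<Rightarrow> bool" where
  "lagrangian k L \<longleftrightarrow> L = perp k L"

definition capV :: "('v \<times> 'v form) set \<Rightarrow> ('v::real_vector) set" where
  "capV L = {X. (X, \<lambda>_. 0) \<in> L}"

definition circ :: "('v::real_vector) form set \<Rightarrow> 'v set" where
  "circ S = {X. \<forall>\<eta>\<in>S. contr X \<eta> = (\<lambda>_. 0)}"

definition Ann :: "nat \<Rightarrow> ('v::real_vector) set \<Rightarrow> 'v form set" where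
  "Ann k E = {\<alpha> \<in> Forms k. \<forall>Y\<in>E. contr Y \<alpha> = (\<lambda>_. 0)}"

definition weakly_lagrangian :: "nat \<Rightarrow> (('v::real_vector) \<times> 'v form) set \<Rightarrow> bool" where
  "weakly_lagrangian k L \<longleftrightarrow> isotropic k L \<and> capV L = circ (snd ` L)"

definition standard :: "nat \<Rightarrow> (('v::real_vector) \<times> 'v form) set \<Rightarrow> bool" where
  "standard k L \<longleftrightarrow> isotropic k L \<and> circ (Ann k (fst ` L)) = fst ` L"

definition higher_poisson ::
  "nat \<Rightarrow> ('v::real_vector) form set \<Rightarrow> ('v form \<Rightarrow> 'v) \<Rightarrow> bool" where
  "higher_poisson k S \<Lambda> \<longleftrightarrow> form_subspace k S \<and>
     (\<forall>a\<in>S. \<forall>b\<in>S. \<Lambda> (\<lambda>ys. a ys + b ys) = \<Lambda> a + \<Lambda> b) \<and>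
     (\<forall>c::real. \<forall>a\<in>S. \<Lambda> (\<lambda>ys. c * a ys) = c *\<^sub>R \<Lambda> a) \<and>
     circ S = {0} \<and>
     (\<forall>\<alpha>\<in>S. \<forall>\<beta>\<in>S. contr (\<Lambda> \<alpha>) \<beta> = (\<lambda>ys. - contr (\<Lambda> \<beta>) \<alpha> ys))"

definition graph :: "('v::real_vector) form set \<Rightarrow> ('v form \<Rightarrow> 'v) \<Rightarrow> ('v \<times> 'v form) set" where
  "graph S \<Lambda> = {(\<Lambda> \<alpha>, \<alpha>) | \<alpha>. \<alpha> \<in> S}"

end

theory Submission
  imports Defs
begin
definition ml :: "('v::real_vector) form \<Rightarrow> bool" where
  "ml \<psi> \<longleftrightarrow> (\<forall>ys i. i < length ys \<longrightarrow> linear (\<lambda>x. \<psi> (ys[i := x])))"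
definition alt :: "('v::real_vector) form \<Rightarrow> bool" where
  "alt \<psi> \<longleftrightarrow> (\<forall>ys i j. i < j \<and> j < length ys \<and> ys ! i = ys ! j \<longrightarrow> \<psi> ys = 0)"

lemma is_form_iff: "is_form k f \<longleftrightarrow> (\<forall>ys. length ys \<noteq> k \<longrightarrow> f ys = 0) \<and> ml f \<and> alt f"
  unfolding is_form_def ml_def alt_def by blast

lemma lin_iff: "linear (f::'v::real_vector\<Rightarrow>real) \<longleftrightarrow> (\<forall>x y. f (x+y) = f x + f y) \<and> (\<forall>c x. f (c *\<^sub>R x) = c * f x)"
  by (simp add: linear_iff)

lemma mlD: "ml \<psi> \<Longrightarrow> i < length ys \<Longrightarrow> linear (\<lambda>x. \<psi> (ys[i := x]))"
  unfolding ml_def by blast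

lemma ml_slot0:
  assumes "ml \<psi>"
  shows "\<psi> ((a+b)#ys) = \<psi> (a#ys) + \<psi> (b#ys)" "\<psi> ((c *\<^sub>R a)#ys) = c * \<psi> (a#ys)"
proof -
  have "linear (\<lambda>x. \<psi> ((a#ys)[0 := x]))" using mlD[OF assms, of 0 "a#ys"] by simp
  then show "\<psi> ((a+b)#ys) = \<psi> (a#ys) + \<psi> (b#ys)" "\<psi> ((c *\<^sub>R a)#ys) = c * \<psi> (a#ys)"
    by (auto simp: lin_iff)
qed

lemma ml_slot1:
  assumes "ml \<psi>"
  shows "\<psi> (z#(a+b)#ys) = \<psi> (z#a#ys) + \<psi> (z#b#ys)"
proof -
  have "linear (\<lambda>x. \<psi> ((z#a#ys)[1 := x]))" using mlD[OF assms, of 1 "z#a#ys"] by simp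
  then show ?thesis by (auto simp: lin_iff)
qed

lemma ml_zero0: "ml \<psi> \<Longrightarrow> \<psi> (0#ys) = 0"
  using ml_slot0(2)[of \<psi> 0 0 ys] by simp

lemma contr_zero_vec: "ml \<psi> \<Longrightarrow> contr 0 \<psi> = (\<lambda>_. 0)"
  by (auto simp: contr_def ml_zero0)

lemma antisym:
  assumes "ml \<psi>" "alt \<psi>"
  shows "\<psi> (a#b#ys) = - \<psi> (b#a#ys)"
proof -
  have z: "\<psi> (x#x#ys) = 0" for x using assms(2) unfolding alt_def
    by (metis One_nat_def length_Cons nth_Cons_0 nth_Cons_Suc zero_less_Suc Suc_less_eq)
  have "0 = \<psi> ((a+b)#(a+b)#ys)" using z by simp
  also have "\<dots> = \<psi> (a#a#ys) + \<psi> (a#b#ys) + \<psi> (b#a#ys) + \<psi> (b#b#ys)"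
    using ml_slot0(1)[OF assms(1)] ml_slot1[OF assms(1)] by simp
  finally show ?thesis using z by simp
qed

lemma ml_contr: "ml \<psi> \<Longrightarrow> ml (contr y \<psi>)"
proof -
  assume a: "ml \<psi>"
  show ?thesis unfolding ml_def contr_def
  proof (intro allI impI)
    fix ys :: "'a list" and i assume "i < length ys"
    then have "linear (\<lambda>x. \<psi> ((y#ys)[Suc i := x]))" using mlD[OF a, of "Suc i" "y#ys"] by simp
    then show "linear (\<lambda>x. \<psi> (y # ys[i := x]))" by simp
  qed
qed

lemma alt_contr: "alt \<psi> \<Longrightarrow> alt (contr y \<psi>)"
  unfolding alt_def contr_def
proof (intro allI impI)
  fix ys i j assume a: "\<forall>ys i j. i < j \<and> j < length ys \<and> ys ! i = ys ! j \<longrightarrow> \<psi> ys = 0"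
    "i < j \<and> j < length (ys::'a list) \<and> ys ! i = ys ! j"
  then show "\<psi> (y#ys) = 0" using a(1)[rule_format, of "Suc i" "Suc j" "y#ys"] by auto
qed

lemma contr_contr_self: "alt \<psi> \<Longrightarrow> contr y (contr y \<psi>) = (\<lambda>_. 0)"
  unfolding alt_def contr_def
  by (auto intro!: ext) (metis One_nat_def length_Cons nth_Cons_0 nth_Cons_Suc zero_less_Suc Suc_less_eq)

lemma contr_add: "contr y (\<lambda>zs. a zs + b zs) = (\<lambda>zs. contr y a zs + contr y b zs)"
  by (simp add: contr_def)
lemma contr_scale: "contr y (\<lambda>zs. c * a zs) = (\<lambda>zs. c * contr y a zs)"
  by (simp add: contr_def)
lemma contr_neg: "contr y (\<lambda>zs. - a zs) = (\<lambda>zs. - contr y a zs)"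
  by (simp add: contr_def)
lemma contr_diff: "contr y (\<lambda>zs. a zs - b zs) = (\<lambda>zs. contr y a zs - contr y b zs)"
  by (simp add: contr_def)
lemma contr_0: "contr y (\<lambda>zs. 0) = (\<lambda>zs. 0)"
  by (simp add: contr_def)

primrec W :: "('v \<Rightarrow> real) \<Rightarrow> 'v form \<Rightarrow> 'v list \<Rightarrow> real" where
  "W f \<psi> [] = 0"
| "W f \<psi> (y#ys) = f y * \<psi> ys - W f (contr y \<psi>) ys"

lemma W_zero: "W f (\<lambda>_. 0) ys = 0"
  by (induction ys) (simp_all add: contr_0)

lemma W_add: "W f (\<lambda>zs. a zs + b zs) ys = W f a ys + W f b ys"
  by (induction ys arbitrary: a b) (simp_all add: contr_add algebra_simps)

lemma W_scale: "W f (\<lambda>zs. c * a zs) ys = c * W f a ys"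
  by (induction ys arbitrary: a) (simp_all add: contr_scale algebra_simps)

lemma W_neg: "W f (\<lambda>zs. - a zs) ys = - W f a ys"
  by (induction ys arbitrary: a) (simp_all add: contr_neg algebra_simps)

lemma W_diff: "W f (\<lambda>zs. a zs - b zs) ys = W f a ys - W f b ys"
  by (induction ys arbitrary: a b) (simp_all add: contr_diff algebra_simps)

lemma W_vanish:
  "(\<forall>zs. length zs \<noteq> m \<longrightarrow> \<psi> zs = 0) \<Longrightarrow> length ys \<noteq> Suc m \<Longrightarrow> W f \<psi> ys = 0"
proof (induction ys arbitrary: \<psi> m)
  case Nil then show ?case by simp
next
  case (Cons y ys)
  show ?case
  proof (cases m)
    case 0
    have "contr y \<psi> = (\<lambda>_. 0)" using Cons.prems 0 by (auto simp: contr_def)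
    then show ?thesis using Cons.prems by (simp add: W_zero)
  next
    case (Suc m')
    have "\<forall>zs. length zs \<noteq> m' \<longrightarrow> contr y \<psi> zs = 0" using Cons.prems Suc by (auto simp: contr_def)
    then have "W f (contr y \<psi>) ys = 0" using Cons.IH[where \<psi>="contr y \<psi>" and m=m'] Cons.prems Suc by auto
    then show ?thesis using Cons.prems by simp
  qed
qed

lemma W_ml:
  assumes "linear f" "ml \<psi>" "i < length ys"
  shows "linear (\<lambda>x. W f \<psi> (ys[i := x]))"
  using assms(2,3)
proof (induction ys arbitrary: \<psi> i)
  case Nil then show ?case by simp
next
  case (Cons y ys)
  show ?case
  proof (cases i)
    case 0
    have ca: "contr (x+x') \<psi> = (\<lambda>zs. contr x \<psi> zs + contr x' \<psi> zs)" for x x'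
      using ml_slot0(1)[OF Cons.prems(1)] by (simp add: contr_def)
    have cs: "contr (c *\<^sub>R x) \<psi> = (\<lambda>zs. c * contr x \<psi> zs)" for c x
      using ml_slot0(2)[OF Cons.prems(1)] by (simp add: contr_def)
    show ?thesis using 0 assms(1)
      by (simp add: lin_iff ca cs W_add W_scale algebra_simps)
  next
    case (Suc j)
    have j: "j < length ys" using Cons.prems Suc by simp
    have l1: "linear (\<lambda>x. \<psi> (ys[j := x]))" using Cons.prems(1) j unfolding ml_def by blast
    have l2: "linear (\<lambda>x. W f (contr y \<psi>) (ys[j := x]))"
      using Cons.IH[OF ml_contr[OF Cons.prems(1)] j] .
    show ?thesis using Suc l1 l2 by (simp add: lin_iff algebra_simps)
  qed
qed

lemma altD: "alt \<psi> \<Longrightarrow> i < j \<Longrightarrow> j < length ys \<Longrightarrow> ys ! i = ys ! j \<Longrightarrow> \<psi> ys = 0"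
  unfolding alt_def by blast

lemma W_key:
  assumes "ml \<psi>" "alt \<psi>" "j < length ys" "ys ! j = y"
  shows "W f (contr y \<psi>) ys = f y * \<psi> ys"
  using assms
proof (induction ys arbitrary: \<psi> j)
  case Nil then show ?case by simp
next
  case (Cons z zs)
  have e: "W f (contr y \<psi>) (z#zs) = f z * \<psi> (y#zs) - W f (contr z (contr y \<psi>)) zs"
    by (simp add: contr_def)
  show ?case
  proof (cases j)
    case 0
    then have zy: "z = y" using Cons.prems by simp
    have "W f (contr z (contr y \<psi>)) zs = 0"
      unfolding zy contr_contr_self[OF Cons.prems(2)] by (rule W_zero)
    then show ?thesis using e zy by simp
  next
    case (Suc j')
    have j': "j' < length zs" "zs ! j' = y" using Cons.prems(3,4) Suc by simp_all
    have a0: "\<psi> (y#zs) = 0"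
      by (rule altD[OF Cons.prems(2), of 0 "Suc j'"]) (use j' in simp_all)
    have sw: "contr z (contr y \<psi>) = (\<lambda>ws. - contr y (contr z \<psi>) ws)"
      by (rule ext) (simp add: contr_def antisym[OF Cons.prems(1,2), of y z])
    have ih: "W f (contr y (contr z \<psi>)) zs = f y * contr z \<psi> zs"
      using Cons.IH[OF ml_contr[OF Cons.prems(1)] alt_contr[OF Cons.prems(2)] j'] .
    have "W f (contr z (contr y \<psi>)) zs = - (f y * \<psi> (z#zs))"
      unfolding sw W_neg ih by (simp add: contr_def)
    then show ?thesis using e a0 by simp
  qed
qed

lemma W_alt_aux:
  "ml \<psi> \<Longrightarrow> alt \<psi> \<Longrightarrow> i < j \<Longrightarrow> j < length ys \<Longrightarrow> ys ! i = ys ! j \<Longrightarrow> W f \<psi> ys = 0"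
proof (induction ys arbitrary: \<psi> i j)
  case Nil then show ?case by simp
next
  case (Cons y ys)
  have "j \<noteq> 0" using Cons.prems(3) by simp
  then obtain j' where j: "j = Suc j'" using not0_implies_Suc by blast
  show ?case
  proof (cases i)
    case 0
    have y: "ys ! j' = y" "j' < length ys" using Cons.prems(4,5) 0 j by simp_all
    have "W f (contr y \<psi>) ys = f y * \<psi> ys" by (rule W_key[OF Cons.prems(1,2) y(2) y(1)])
    then show ?thesis by simp
  next
    case (Suc i')
    have a: "i' < j'" "j' < length ys" "ys ! i' = ys ! j'" using Cons.prems(3,4,5) Suc j by simp_all
    have "\<psi> ys = 0" by (rule altD[OF Cons.prems(2) a])
    moreover have "W f (contr y \<psi>) ys = 0"
      by (rule Cons.IH[OF ml_contr[OF Cons.prems(1)] alt_contr[OF Cons.prems(2)] a])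
    ultimately show ?thesis by simp
  qed
qed

lemma W_alt:
  assumes "ml \<psi>" "alt \<psi>"
  shows "alt (W f \<psi>)"
  unfolding alt_def using W_alt_aux[OF assms] by blast

lemma W_form:
  assumes "linear f" "is_form m \<psi>"
  shows "is_form (Suc m) (W f \<psi>)"
proof -
  have v: "\<forall>zs. length zs \<noteq> m \<longrightarrow> \<psi> zs = 0" and m: "ml \<psi>" and a: "alt \<psi>"
    using assms(2) unfolding is_form_iff by auto
  have "ml (W f \<psi>)" unfolding ml_def using W_ml[OF assms(1) m] by blast
  then show ?thesis unfolding is_form_iff using W_vanish[OF v] W_alt[OF m a] by blast
qed

lemma form_add: "is_form k a \<Longrightarrow> is_form k b \<Longrightarrow> is_form k (\<lambda>ys. a ys + b ys)"
  unfolding is_form_def by (auto simp: lin_iff algebra_simps)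

lemma form_scale: "is_form k a \<Longrightarrow> is_form k (\<lambda>ys. c * a ys)"
  unfolding is_form_def by (auto simp: lin_iff algebra_simps)

lemma form_diff: "is_form k a \<Longrightarrow> is_form k b \<Longrightarrow> is_form k (\<lambda>ys. a ys - b ys)"
  unfolding is_form_def by (auto simp: lin_iff algebra_simps)

lemma form_neg: "is_form k a \<Longrightarrow> is_form k (\<lambda>ys. - a ys)"
  unfolding is_form_def by (auto simp: lin_iff algebra_simps)

lemma form_zero: "is_form k (\<lambda>ys. 0)"
  unfolding is_form_def by (auto simp: lin_iff)

lemma form_contr:
  assumes "is_form (Suc m) a" shows "is_form m (contr y a)"
proof -
  have v: "\<forall>zs. length zs \<noteq> Suc m \<longrightarrow> a zs = 0" and ml: "ml a" and al: "alt a"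
    using assms unfolding is_form_iff by auto
  have "\<forall>zs. length zs \<noteq> m \<longrightarrow> contr y a zs = 0" using v by (simp add: contr_def)
  then show ?thesis unfolding is_form_iff using ml_contr[OF ml] alt_contr[OF al] by blast
qed

lemma form_ml: "is_form k a \<Longrightarrow> ml a" by (simp add: is_form_iff)
lemma form_alt: "is_form k a \<Longrightarrow> alt a" by (simp add: is_form_iff)

lemma contr_lin_vec:
  assumes "ml a"
  shows "contr (Y + c *\<^sub>R e) a = (\<lambda>ys. contr Y a ys + c * contr e a ys)"
  using ml_slot0[OF assms] by (simp add: contr_def)

lemma extend:
  fixes \<phi> :: "'v::euclidean_space \<Rightarrow> 'v form" and B :: "'v set"
  assumes "finite B"
  shows "independent B \<Longrightarrow> (\<forall>Y\<in>span B. is_form m (\<phi> Y)) \<Longrightarrow>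
    (\<forall>Y\<in>span B. \<forall>Y'\<in>span B. \<phi> (Y+Y') = (\<lambda>ys. \<phi> Y ys + \<phi> Y' ys)) \<Longrightarrow>
    (\<forall>c. \<forall>Y\<in>span B. \<phi> (c *\<^sub>R Y) = (\<lambda>ys. c * \<phi> Y ys)) \<Longrightarrow>
    (\<forall>Y\<in>span B. \<forall>Y'\<in>span B. contr Y (\<phi> Y') = (\<lambda>ys. - contr Y' (\<phi> Y) ys)) \<Longrightarrow>
    \<exists>\<beta>. is_form (Suc m) \<beta> \<and> (\<forall>Y\<in>span B. contr Y \<beta> = \<phi> Y)"
  using assms
proof (induction B rule: finite_induct)
  case empty
  have "\<phi> 0 = (\<lambda>ys. 0)" using empty.prems(4)[rule_format, of 0 0] by simp
  then show ?case using form_zero by (auto simp: contr_def)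
next
  case (insert e F)
  have indF: "independent F" and eF: "e \<notin> span F"
    using insert.prems(1) insert.hyps(2) by (auto simp: independent_insert)
  have sub: "span F \<subseteq> span (insert e F)" by (rule span_mono) blast
  have eS: "e \<in> span (insert e F)" by (rule span_base) simp
  have h2: "\<forall>Y\<in>span F. is_form m (\<phi> Y)" using insert.prems(2) sub by blast
  have h3: "\<forall>Y\<in>span F. \<forall>Y'\<in>span F. \<phi> (Y+Y') = (\<lambda>ys. \<phi> Y ys + \<phi> Y' ys)"
    using insert.prems(3) sub by blast
  have h4: "\<forall>c. \<forall>Y\<in>span F. \<phi> (c *\<^sub>R Y) = (\<lambda>ys. c * \<phi> Y ys)"
    using insert.prems(4) sub by blast
  have h5: "\<forall>Y\<in>span F. \<forall>Y'\<in>span F. contr Y (\<phi> Y') = (\<lambda>ys. - contr Y' (\<phi> Y) ys)"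
    using insert.prems(5) sub by blast
  have "\<exists>\<beta>. is_form (Suc m) \<beta> \<and> (\<forall>Y\<in>span F. contr Y \<beta> = \<phi> Y)"
    by (rule insert.IH[OF indF h2 h3 h4 h5])
  then obtain \<beta>' where b': "is_form (Suc m) \<beta>'" "\<forall>Y\<in>span F. contr Y \<beta>' = \<phi> Y"
    by (elim exE conjE)
  obtain g :: "'v \<Rightarrow> real" where g: "linear g" "\<forall>x\<in>insert e F. g x = (if x = e then 1 else 0)"
    using linear_independent_extend[OF insert.prems(1), of "\<lambda>x. if x = e then 1 else 0"] by auto
  have ge: "g e = 1" using g by simp
  have g0: "g Y = 0" if "Y \<in> span F" for Y
  proof -
    have "\<forall>x\<in>F. g x = 0" using g(2) insert.hyps(2) by auto
    then show ?thesis using linear_eq_0_on_span[OF g(1), of F Y] that by blast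
  qed
  define \<psi> where "\<psi> = (\<lambda>ys. \<phi> e ys - contr e \<beta>' ys)"
  have fe: "is_form m (\<phi> e)" using insert.prems(2) eS by blast
  have fpsi: "is_form m \<psi>" unfolding \<psi>_def by (rule form_diff[OF fe form_contr[OF b'(1)]])
  define \<beta> where "\<beta> = (\<lambda>ys. \<beta>' ys + W g \<psi> ys)"
  have fb: "is_form (Suc m) \<beta>" unfolding \<beta>_def by (rule form_add[OF b'(1) W_form[OF g(1) fpsi]])
  have cb: "contr Y \<beta> = (\<lambda>ys. contr Y \<beta>' ys + g Y * \<psi> ys - W g (contr Y \<psi>) ys)" for Y
    by (simp add: \<beta>_def contr_def algebra_simps)
  have ce: "contr e \<beta> = \<phi> e"
  proof -
    have s: "contr e (\<phi> e) = (\<lambda>_. 0)"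
      using insert.prems(5)[rule_format, OF eS eS] by (auto intro!: ext dest: fun_cong)
    have "contr e \<psi> = (\<lambda>_. 0)"
      unfolding \<psi>_def contr_diff s contr_contr_self[OF form_alt[OF b'(1)]] by simp
    then show ?thesis using ge by (simp add: cb W_zero \<psi>_def)
  qed
  have cY: "contr Y \<beta> = \<phi> Y" if Y: "Y \<in> span F" for Y
  proof -
    have YS: "Y \<in> span (insert e F)" using Y sub by blast
    have "contr Y \<psi> = (\<lambda>_. 0)"
    proof (rule ext)
      fix ys
      have "contr Y \<psi> ys = contr Y (\<phi> e) ys - \<beta>' (e#Y#ys)" by (simp add: \<psi>_def contr_def)
      also have "contr Y (\<phi> e) ys = - contr e (\<phi> Y) ys"
        using insert.prems(5)[rule_format, OF YS eS] by (simp add: fun_eq_iff)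
      also have "\<beta>' (e#Y#ys) = - \<beta>' (Y#e#ys)"
        by (rule antisym[OF form_ml[OF b'(1)] form_alt[OF b'(1)]])
      also have "\<beta>' (Y#e#ys) = \<phi> Y (e#ys)" using b'(2) Y by (simp add: contr_def fun_eq_iff)
      finally show "contr Y \<psi> ys = 0" by (simp add: contr_def)
    qed
    then show ?thesis using b'(2) Y g0[OF Y] by (simp add: cb W_zero)
  qed
  show ?case
  proof (intro exI conjI ballI)
    show "is_form (Suc m) \<beta>" by (rule fb)
    fix Y assume Y: "Y \<in> span (insert e F)"
    then obtain c where c: "Y - c *\<^sub>R e \<in> span F" using span_breakdown_eq by blast
    define Y' where "Y' = Y - c *\<^sub>R e"
    have Y'S: "Y' \<in> span F" using c Y'_def by simp
    have Yeq: "Y = Y' + c *\<^sub>R e" by (simp add: Y'_def)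
    have Y'S2: "Y' \<in> span (insert e F)" using Y'S sub by blast
    have ceS: "c *\<^sub>R e \<in> span (insert e F)" using eS by (rule span_mul)
    have "contr Y \<beta> = (\<lambda>ys. contr Y' \<beta> ys + c * contr e \<beta> ys)"
      unfolding Yeq by (rule contr_lin_vec[OF form_ml[OF fb]])
    also have "\<dots> = (\<lambda>ys. \<phi> Y' ys + c * \<phi> e ys)" using cY[OF Y'S] ce by simp
    also have "\<dots> = \<phi> Y"
      using insert.prems(3)[rule_format, OF Y'S2 ceS] insert.prems(4)[rule_format, OF eS, of c] Yeq
      by simp
    finally show "contr Y \<beta> = \<phi> Y" .
  qed
qed

lemma perp_iff: "u \<in> perp k L \<longleftrightarrow> snd u \<in> Forms k \<and> (\<forall>w\<in>L. \<forall>ys. contr (fst u) (snd w) ys + contr (fst w) (snd u) ys = 0)"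
  by (cases u) (auto simp: perp_def Amb_def pairing_def fun_eq_iff)

lemma Forms_iff: "a \<in> Forms k \<longleftrightarrow> is_form k a" by (simp add: Forms_def)

lemma part1a:
  assumes am: "amb_subspace k L" and wl: "weakly_lagrangian k L" and c0: "capV L = {0}"
  shows "\<exists>S \<Lambda>. higher_poisson k S \<Lambda> \<and> L = graph S \<Lambda>"
proof -
  have LA: "L \<subseteq> Amb k" and L0: "(0, \<lambda>_. 0) \<in> L"
    and Ladd: "\<And>u w. u \<in> L \<Longrightarrow> w \<in> L \<Longrightarrow> (fst u + fst w, \<lambda>ys. snd u ys + snd w ys) \<in> L"
    and Lsc: "\<And>c u. u \<in> L \<Longrightarrow> (c *\<^sub>R fst u, \<lambda>ys. c * snd u ys) \<in> L"
    using am unfolding amb_subspace_def by auto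
  have iso: "L \<subseteq> perp k L" and cv: "capV L = circ (snd ` L)"
    using wl unfolding weakly_lagrangian_def isotropic_def by auto
  have uniq: "X = X'" if "(X, \<alpha>) \<in> L" "(X', \<alpha>) \<in> L" for X X' \<alpha>
  proof -
    have "((-1) *\<^sub>R X', \<lambda>ys. -1 * \<alpha> ys) \<in> L" using Lsc[OF that(2), of "-1"] by simp
    from Ladd[OF that(1) this] have "(X + (-1) *\<^sub>R X', \<lambda>ys. \<alpha> ys + -1 * \<alpha> ys) \<in> L" by simp
    moreover have "(\<lambda>ys::'a list. \<alpha> ys + -1 * \<alpha> ys) = (\<lambda>_. 0)" by simp
    ultimately have "X - X' \<in> capV L" by (simp add: capV_def)
    then show ?thesis using c0 by simp
  qed
  define \<Lambda> where "\<Lambda> = (\<lambda>\<alpha>. THE X. (X, \<alpha>) \<in> L)"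
  have \<Lambda>eq: "\<Lambda> \<alpha> = X" if "(X, \<alpha>) \<in> L" for X \<alpha>
    unfolding \<Lambda>_def using that uniq by (metis (no_types, lifting) the_equality)
  define S where "S = snd ` L"
  have inL: "(\<Lambda> a, a) \<in> L" if aS: "a \<in> S" for a
  proof -
    obtain u where "u \<in> L" "a = snd u" using aS unfolding S_def by blast
    then show ?thesis using \<Lambda>eq[of "fst u" a] by (cases u) auto
  qed
  have SF: "S \<subseteq> Forms k" using LA by (auto simp: S_def Amb_def)
  have fs: "form_subspace k S"
    unfolding form_subspace_def
  proof (intro conjI ballI allI)
    show "S \<subseteq> Forms k" by (rule SF)
    show "(\<lambda>_. 0) \<in> S" using L0 unfolding S_def by force
  next
    fix a b assume "a \<in> S" "b \<in> S"
    from Ladd[OF inL[OF this(1)] inL[OF this(2)]] show "(\<lambda>ys. a ys + b ys) \<in> S"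
      unfolding S_def by force
  next
    fix c :: real and a assume "a \<in> S"
    from Lsc[OF inL[OF this]] show "(\<lambda>ys. c * a ys) \<in> S" unfolding S_def by force
  qed
  have hp: "higher_poisson k S \<Lambda>"
    unfolding higher_poisson_def
  proof (intro conjI ballI allI)
    show "form_subspace k S" by (rule fs)
  next
    fix a b assume "a \<in> S" "b \<in> S"
    from Ladd[OF inL[OF this(1)] inL[OF this(2)]] show "\<Lambda> (\<lambda>ys. a ys + b ys) = \<Lambda> a + \<Lambda> b"
      using \<Lambda>eq by simp
  next
    fix c :: real and a assume "a \<in> S"
    from Lsc[OF inL[OF this]] show "\<Lambda> (\<lambda>ys. c * a ys) = c *\<^sub>R \<Lambda> a" using \<Lambda>eq by simp
  next
    show "circ S = {0}" using cv c0 S_def by simp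
  next
    fix a b assume a: "a \<in> S" and b: "b \<in> S"
    have "(\<Lambda> a, a) \<in> perp k L" using iso inL[OF a] by blast
    then have "\<forall>ys. contr (\<Lambda> a) b ys + contr (\<Lambda> b) a ys = 0"
      using inL[OF b] unfolding perp_iff by force
    then show "contr (\<Lambda> a) b = (\<lambda>ys. - contr (\<Lambda> b) a ys)"
      by (auto simp: fun_eq_iff algebra_simps add_eq_0_iff)
  qed
  have "L = graph S \<Lambda>"
  proof
    show "L \<subseteq> graph S \<Lambda>"
    proof
      fix u assume u: "u \<in> L"
      then have "u = (\<Lambda> (snd u), snd u)" using \<Lambda>eq[of "fst u" "snd u"] by simp
      then show "u \<in> graph S \<Lambda>" unfolding graph_def S_def using u by blast
    qed
    show "graph S \<Lambda> \<subseteq> L" unfolding graph_def using inL by blast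
  qed
  then show ?thesis using hp by blast
qed

lemma hp_facts:
  assumes hp: "higher_poisson k S \<Lambda>"
  shows "S \<subseteq> Forms k" "(\<lambda>_. 0) \<in> S"
    "\<And>a b. a \<in> S \<Longrightarrow> b \<in> S \<Longrightarrow> (\<lambda>ys. a ys + b ys) \<in> S"
    "\<And>c a. a \<in> S \<Longrightarrow> (\<lambda>ys. c * a ys) \<in> S"
    "\<And>a b. a \<in> S \<Longrightarrow> b \<in> S \<Longrightarrow> \<Lambda> (\<lambda>ys. a ys + b ys) = \<Lambda> a + \<Lambda> b"
    "\<And>c a. a \<in> S \<Longrightarrow> \<Lambda> (\<lambda>ys. c * a ys) = c *\<^sub>R \<Lambda> a"
    "\<And>a b. a \<in> S \<Longrightarrow> b \<in> S \<Longrightarrow> contr (\<Lambda> a) b = (\<lambda>ys. - contr (\<Lambda> b) a ys)"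
    "\<Lambda> (\<lambda>_. 0) = 0"
proof -
  note H = hp[unfolded higher_poisson_def]
  note F = H[THEN conjunct1, unfolded form_subspace_def]
  show "S \<subseteq> Forms k" using F by (rule conjunct1)
  show z: "(\<lambda>_. 0) \<in> S" using F[THEN conjunct2] by (rule conjunct1)
  show "\<And>a b. a \<in> S \<Longrightarrow> b \<in> S \<Longrightarrow> (\<lambda>ys. a ys + b ys) \<in> S"
    using F[THEN conjunct2, THEN conjunct2, THEN conjunct1] by blast
  show "\<And>c a. a \<in> S \<Longrightarrow> (\<lambda>ys. c * a ys) \<in> S"
    using F[THEN conjunct2, THEN conjunct2, THEN conjunct2] by blast
  show "\<And>a b. a \<in> S \<Longrightarrow> b \<in> S \<Longrightarrow> \<Lambda> (\<lambda>ys. a ys + b ys) = \<Lambda> a + \<Lambda> b"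
    using H[THEN conjunct2, THEN conjunct1] by blast
  have sc: "\<forall>c. \<forall>a\<in>S. \<Lambda> (\<lambda>ys. c * a ys) = c *\<^sub>R \<Lambda> a"
    using H[THEN conjunct2, THEN conjunct2, THEN conjunct1] .
  then show "\<And>c a. a \<in> S \<Longrightarrow> \<Lambda> (\<lambda>ys. c * a ys) = c *\<^sub>R \<Lambda> a" by blast
  show "\<And>a b. a \<in> S \<Longrightarrow> b \<in> S \<Longrightarrow> contr (\<Lambda> a) b = (\<lambda>ys. - contr (\<Lambda> b) a ys)"
    using H[THEN conjunct2, THEN conjunct2, THEN conjunct2, THEN conjunct2] by blast
  have "\<Lambda> (\<lambda>ys. 0 * (\<lambda>_. 0) ys) = 0 *\<^sub>R \<Lambda> (\<lambda>_. 0)" by (rule sc[rule_format, OF z])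
  then show "\<Lambda> (\<lambda>_. 0) = 0" by simp
qed

lemma part1b:
  assumes hp: "higher_poisson k S \<Lambda>" and LG: "L = graph S \<Lambda>"
  shows "capV L = {0}"
proof -
  note h = hp_facts[OF hp]
  show ?thesis unfolding capV_def LG graph_def using h(2,8) by auto
qed

lemma part2:
  fixes L :: "('v::euclidean_space \<times> 'v form) set"
  assumes k1: "1 \<le> k" and hp: "higher_poisson k S \<Lambda>" and LG: "L = graph S \<Lambda>"
    and iso: "isotropic k L"
  shows "lagrangian k L \<longleftrightarrow> standard k L \<and> Ann k (\<Lambda> ` S) = {\<alpha> \<in> S. \<Lambda> \<alpha> = 0}"
proof -
  note h = hp_facts[OF hp]
  have SF: "is_form k a" if "a \<in> S" for a using h(1) that by (auto simp: Forms_iff)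
  have fstL: "fst ` L = \<Lambda> ` S" unfolding LG graph_def by force
  have inG: "u \<in> L \<longleftrightarrow> (\<exists>a\<in>S. u = (\<Lambda> a, a))" for u unfolding LG graph_def by blast
  have c0: "contr 0 a = (\<lambda>_. 0)" if "is_form j a" for a j
    using contr_zero_vec[OF form_ml[OF that]] .
  have Sdiff: "(\<lambda>ys. a ys - b ys) \<in> S" if "a \<in> S" "b \<in> S" for a b
    using h(3)[OF that(1) h(4)[OF that(2), of "-1"]] by simp
  have \<Lambda>diff: "\<Lambda> (\<lambda>ys. a ys - b ys) = \<Lambda> a - \<Lambda> b" if "a \<in> S" "b \<in> S" for a b
    using h(5)[OF that(1) h(4)[OF that(2), of "-1"]] h(6)[OF that(2), of "-1"] by simp
  have kerAnn: "{\<alpha> \<in> S. \<Lambda> \<alpha> = 0} \<subseteq> Ann k (\<Lambda> ` S)"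
  proof
    fix \<alpha> assume a: "\<alpha> \<in> {\<alpha> \<in> S. \<Lambda> \<alpha> = 0}"
    have "contr (\<Lambda> \<gamma>) \<alpha> = (\<lambda>_. 0)" if g: "\<gamma> \<in> S" for \<gamma>
      using h(7)[OF g, of \<alpha>] a c0[OF SF[OF g]] by auto
    then show "\<alpha> \<in> Ann k (\<Lambda> ` S)" using a h(1) unfolding Ann_def by auto
  qed
  have perpI: "(X, \<beta>) \<in> perp k L \<longleftrightarrow> is_form k \<beta> \<and> (\<forall>\<gamma>\<in>S. \<forall>ys. contr X \<gamma> ys + contr (\<Lambda> \<gamma>) \<beta> ys = 0)" for X \<beta>
    unfolding perp_iff Forms_iff LG graph_def by auto
  show ?thesis
  proof
    assume lag: "lagrangian k L"
    then have LP: "L = perp k L" unfolding lagrangian_def .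
    have AnnKer: "Ann k (\<Lambda> ` S) \<subseteq> {\<alpha> \<in> S. \<Lambda> \<alpha> = 0}"
    proof
      fix \<alpha> assume a: "\<alpha> \<in> Ann k (\<Lambda> ` S)"
      then have fa: "is_form k \<alpha>" and ca: "\<forall>\<gamma>\<in>S. contr (\<Lambda> \<gamma>) \<alpha> = (\<lambda>_. 0)"
        unfolding Ann_def Forms_iff by auto
      have "(0, \<alpha>) \<in> perp k L"
        unfolding perpI using fa ca c0[OF SF] by (auto simp: fun_eq_iff)
      then have "(0, \<alpha>) \<in> L" using LP by simp
      then show "\<alpha> \<in> {\<alpha> \<in> S. \<Lambda> \<alpha> = 0}" unfolding inG by auto
    qed
    have AK: "Ann k (\<Lambda> ` S) = {\<alpha> \<in> S. \<Lambda> \<alpha> = 0}" using AnnKer kerAnn by blast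
    have circ_sub: "circ (Ann k (\<Lambda> ` S)) \<subseteq> \<Lambda> ` S"
    proof
      fix X assume X: "X \<in> circ (Ann k (\<Lambda> ` S))"
      have Xk: "contr X \<delta> = (\<lambda>_. 0)" if "\<delta> \<in> S" "\<Lambda> \<delta> = 0" for \<delta>
        using X that AK unfolding circ_def by auto
      define \<phi> where "\<phi> = (\<lambda>Y ys. - contr X (SOME \<alpha>. \<alpha> \<in> S \<and> \<Lambda> \<alpha> = Y) ys)"
      have \<phi>eq: "\<phi> (\<Lambda> \<alpha>) = (\<lambda>ys. - contr X \<alpha> ys)" if a: "\<alpha> \<in> S" for \<alpha>
      proof -
        define \<alpha>' where "\<alpha>' = (SOME \<alpha>'. \<alpha>' \<in> S \<and> \<Lambda> \<alpha>' = \<Lambda> \<alpha>)"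
        have a': "\<alpha>' \<in> S" "\<Lambda> \<alpha>' = \<Lambda> \<alpha>" unfolding \<alpha>'_def using someI[of "\<lambda>\<alpha>'. \<alpha>' \<in> S \<and> \<Lambda> \<alpha>' = \<Lambda> \<alpha>" \<alpha>] a by auto
        have "contr X (\<lambda>ys. \<alpha>' ys - \<alpha> ys) = (\<lambda>_. 0)"
          using Xk[OF Sdiff[OF a'(1) a]] \<Lambda>diff[OF a'(1) a] a'(2) by simp
        then have "contr X \<alpha>' = contr X \<alpha>" by (simp add: contr_def fun_eq_iff)
        then show ?thesis unfolding \<phi>_def \<alpha>'_def[symmetric] by simp
      qed
      have subE: "subspace (\<Lambda> ` S)"
        unfolding subspace_def
      proof (intro conjI ballI allI)
        show "0 \<in> \<Lambda> ` S" using h(2,8) by force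
      next
        fix x y assume xy: "x \<in> \<Lambda> ` S" "y \<in> \<Lambda> ` S"
        obtain a where a: "a \<in> S" "x = \<Lambda> a" using xy(1) by (rule imageE) simp
        obtain b where b: "b \<in> S" "y = \<Lambda> b" using xy(2) by (rule imageE) simp
        have "x + y = \<Lambda> (\<lambda>ys. a ys + b ys)" using h(5)[OF a(1) b(1)] a b by simp
        then show "x + y \<in> \<Lambda> ` S" using imageI[OF h(3)[OF a(1) b(1)], of \<Lambda>] by (simp only:)
      next
        fix c :: real and x assume x: "x \<in> \<Lambda> ` S"
        obtain a where a: "a \<in> S" "x = \<Lambda> a" using x by (rule imageE) simp
        have "c *\<^sub>R x = \<Lambda> (\<lambda>ys. c * a ys)" using h(6)[OF a(1)] a by simp
        then show "c *\<^sub>R x \<in> \<Lambda> ` S" using imageI[OF h(4)[OF a(1)], of \<Lambda>] by (simp only:)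
      qed
      obtain B where B: "B \<subseteq> \<Lambda> ` S" "independent B" "\<Lambda> ` S \<subseteq> span B" "card B = dim (\<Lambda> ` S)"
        by (rule basis_exists)
      have spB: "span B = \<Lambda> ` S" using span_subspace[OF B(1,3) subE] .
      have finB: "finite B" using finiteI_independent[OF B(2)] .
      have km: "Suc (k - 1) = k" using k1 by simp
      have "\<exists>\<beta>. is_form (Suc (k-1)) \<beta> \<and> (\<forall>Y\<in>span B. contr Y \<beta> = \<phi> Y)"
      proof (rule extend[OF finB B(2)]; unfold spB; intro ballI allI)
        fix Y assume "Y \<in> \<Lambda> ` S"
        then obtain a where a: "a \<in> S" "Y = \<Lambda> a" by blast
        have "is_form (k-1) (contr X a)" using form_contr[of "k-1" a X] SF[OF a(1)] km by simp
        then show "is_form (k-1) (\<phi> Y)" using \<phi>eq[OF a(1)] a(2) form_neg by simp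
      next
        fix Y Y' assume "Y \<in> \<Lambda> ` S" "Y' \<in> \<Lambda> ` S"
        then obtain a b where ab: "a \<in> S" "b \<in> S" "Y = \<Lambda> a" "Y' = \<Lambda> b" by blast
        have "\<phi> (Y + Y') = \<phi> (\<Lambda> (\<lambda>ys. a ys + b ys))" using h(5)[OF ab(1,2)] ab by simp
        also have "\<dots> = (\<lambda>ys. - contr X (\<lambda>ys. a ys + b ys) ys)" using \<phi>eq h(3)[OF ab(1,2)] by blast
        finally show "\<phi> (Y + Y') = (\<lambda>ys. \<phi> Y ys + \<phi> Y' ys)"
          using \<phi>eq[OF ab(1)] \<phi>eq[OF ab(2)] ab by (simp add: contr_def)
      next
        fix c :: real and Y assume "Y \<in> \<Lambda> ` S"
        then obtain a where a: "a \<in> S" "Y = \<Lambda> a" by blast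
        have "\<phi> (c *\<^sub>R Y) = \<phi> (\<Lambda> (\<lambda>ys. c * a ys))" using h(6)[OF a(1)] a by simp
        also have "\<dots> = (\<lambda>ys. - contr X (\<lambda>ys. c * a ys) ys)" using \<phi>eq h(4)[OF a(1)] by blast
        finally show "\<phi> (c *\<^sub>R Y) = (\<lambda>ys. c * \<phi> Y ys)"
          using \<phi>eq[OF a(1)] a by (simp add: contr_def)
      next
        fix Y Y' assume "Y \<in> \<Lambda> ` S" "Y' \<in> \<Lambda> ` S"
        then obtain a b where ab: "a \<in> S" "b \<in> S" "Y = \<Lambda> a" "Y' = \<Lambda> b" by blast
        show "contr Y (\<phi> Y') = (\<lambda>ys. - contr Y' (\<phi> Y) ys)"
        proof (rule ext)
          fix ys
          have "contr Y (\<phi> Y') ys = - b (X # \<Lambda> a # ys)"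
            using \<phi>eq[OF ab(2)] ab by (simp add: contr_def)
          also have "b (X # \<Lambda> a # ys) = - b (\<Lambda> a # X # ys)"
            by (rule antisym[OF form_ml[OF SF[OF ab(2)]] form_alt[OF SF[OF ab(2)]]])
          also have "b (\<Lambda> a # X # ys) = contr (\<Lambda> a) b (X # ys)" by (simp add: contr_def)
          also have "\<dots> = - a (\<Lambda> b # X # ys)" using h(7)[OF ab(1,2)] by (simp add: contr_def)
          also have "a (\<Lambda> b # X # ys) = - a (X # \<Lambda> b # ys)"
            by (rule antisym[OF form_ml[OF SF[OF ab(1)]] form_alt[OF SF[OF ab(1)]]])
          finally show "contr Y (\<phi> Y') ys = - contr Y' (\<phi> Y) ys"
            using \<phi>eq[OF ab(1)] ab by (simp add: contr_def)
        qed
      qed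
      then obtain \<beta> where \<beta>: "is_form k \<beta>" "\<forall>Y\<in>\<Lambda> ` S. contr Y \<beta> = \<phi> Y"
        unfolding km spB by blast
      have "(X, \<beta>) \<in> perp k L"
        unfolding perpI using \<beta> \<phi>eq by auto
      then have "(X, \<beta>) \<in> L" using LP by simp
      then show "X \<in> \<Lambda> ` S" unfolding inG by auto
    qed
    have "circ (Ann k (fst ` L)) = fst ` L"
    proof
      show "circ (Ann k (fst ` L)) \<subseteq> fst ` L" using circ_sub fstL by simp
      show "fst ` L \<subseteq> circ (Ann k (fst ` L))" unfolding circ_def Ann_def by auto
    qed
    then show "standard k L \<and> Ann k (\<Lambda> ` S) = {\<alpha> \<in> S. \<Lambda> \<alpha> = 0}"
      using iso AK unfolding standard_def by blast
  next
    assume st: "standard k L \<and> Ann k (\<Lambda> ` S) = {\<alpha> \<in> S. \<Lambda> \<alpha> = 0}"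
    then have cE: "circ (Ann k (\<Lambda> ` S)) = \<Lambda> ` S" and AK: "Ann k (\<Lambda> ` S) = {\<alpha> \<in> S. \<Lambda> \<alpha> = 0}"
      unfolding standard_def fstL by auto
    have "perp k L \<subseteq> L"
    proof
      fix u assume u: "u \<in> perp k L"
      obtain X \<beta> where uX: "u = (X, \<beta>)" by (cases u)
      have fb: "is_form k \<beta>" and pc: "\<forall>\<gamma>\<in>S. \<forall>ys. contr X \<gamma> ys + contr (\<Lambda> \<gamma>) \<beta> ys = 0"
        using u unfolding uX perpI by auto
      have "X \<in> circ (Ann k (\<Lambda> ` S))"
        unfolding circ_def
      proof (intro CollectI ballI ext)
        fix \<eta> ys assume "\<eta> \<in> Ann k (\<Lambda> ` S)"
        then have e: "\<eta> \<in> S" "\<Lambda> \<eta> = 0" using AK by auto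
        have "contr X \<eta> ys + contr (\<Lambda> \<eta>) \<beta> ys = 0" using pc e(1) by blast
        then show "contr X \<eta> ys = 0" using e(2) c0[OF fb] by simp
      qed
      then obtain \<alpha>0 where a0: "\<alpha>0 \<in> S" "X = \<Lambda> \<alpha>0" using cE by auto
      define \<delta> where "\<delta> = (\<lambda>ys. \<beta> ys - \<alpha>0 ys)"
      have "\<delta> \<in> Ann k (\<Lambda> ` S)"
        unfolding Ann_def Forms_iff
      proof (intro CollectI conjI ballI)
        show "is_form k \<delta>" unfolding \<delta>_def by (rule form_diff[OF fb SF[OF a0(1)]])
        fix Y assume "Y \<in> \<Lambda> ` S"
        then obtain \<gamma> where g: "\<gamma> \<in> S" "Y = \<Lambda> \<gamma>" by blast
        show "contr Y \<delta> = (\<lambda>_. 0)"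
        proof (rule ext)
          fix ys
          have "contr Y \<delta> ys = contr (\<Lambda> \<gamma>) \<beta> ys - contr (\<Lambda> \<gamma>) \<alpha>0 ys"
            using g by (simp add: \<delta>_def contr_def)
          also have "contr (\<Lambda> \<gamma>) \<alpha>0 ys = - contr X \<gamma> ys" using h(7)[OF g(1) a0(1)] a0(2) by simp
          also have "contr (\<Lambda> \<gamma>) \<beta> ys = - contr X \<gamma> ys" using pc g(1) by (simp add: eq_neg_iff_add_eq_0 add.commute)
          finally show "contr Y \<delta> ys = 0" by simp
        qed
      qed
      then have d: "\<delta> \<in> S" "\<Lambda> \<delta> = 0" using AK by auto
      have beq: "\<beta> = (\<lambda>ys. \<alpha>0 ys + \<delta> ys)" by (simp add: \<delta>_def)
      have "\<beta> \<in> S" "\<Lambda> \<beta> = X" unfolding beq using h(3,5)[OF a0(1) d(1)] d(2) a0(2) by auto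
      then show "u \<in> L" unfolding uX inG by auto
    qed
    moreover have "L \<subseteq> perp k L" using iso unfolding isotropic_def .
    ultimately show "lagrangian k L" unfolding lagrangian_def by blast
  qed
qed

theorem proposition3p16:
  fixes L :: "('v::euclidean_space \<times> 'v form) set" and k n :: nat
  assumes "DIM('v) = n" and "1 \<le> k" and "k \<le> n - 1"
    and "amb_subspace k L" and "weakly_lagrangian k L"
  shows "(capV L = {0} \<longleftrightarrow> (\<exists>S \<Lambda>. higher_poisson k S \<Lambda> \<and> L = graph S \<Lambda>))
    \<and> (\<forall>S \<Lambda>. higher_poisson k S \<Lambda> \<and> L = graph S \<Lambda> \<longrightarrow>
         (lagrangian k L \<longleftrightarrow>
            standard k L \<and> Ann k (\<Lambda> ` S) = {\<alpha> \<in> S. \<Lambda> \<alpha> = 0}))"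
proof -
  have iso: "isotropic k L" using assms(5) unfolding weakly_lagrangian_def by blast
  show ?thesis
  proof (intro conjI allI impI)
    show "capV L = {0} \<longleftrightarrow> (\<exists>S \<Lambda>. higher_poisson k S \<Lambda> \<and> L = graph S \<Lambda>)"
    proof
      assume "capV L = {0}"
      then show "\<exists>S \<Lambda>. higher_poisson k S \<Lambda> \<and> L = graph S \<Lambda>" by (rule part1a[OF assms(4,5)])
    next
      assume "\<exists>S \<Lambda>. higher_poisson k S \<Lambda> \<and> L = graph S \<Lambda>"
      then obtain S \<Lambda> where "higher_poisson k S \<Lambda>" "L = graph S \<Lambda>" by (elim exE conjE)
      then show "capV L = {0}" by (rule part1b)
    qed
  next
    fix S \<Lambda> assume "higher_poisson k S \<Lambda> \<and> L = graph S \<Lambda>"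
    then show "lagrangian k L \<longleftrightarrow> standard k L \<and> Ann k (\<Lambda> ` S) = {\<alpha> \<in> S. \<Lambda> \<alpha> = 0}"
      using part2[OF assms(2) _ _ iso] by (elim conjE)
  qed
qed
end
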